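(* Consider a classification task in which the unlabeled graph $\overline G$ has support $\overline{\mathcal G}$ equal to all graphs on $n\in\mathbb N$ vertices, the edges of $\overline G$ are jointly independent, and $\mathbf X\in\mathcal Z^{n\times d}$ for a finite set $\mathcal Z$. Fix a subgraph $g_{exp}$ and let the label be $Y=\mathds 1(g_{exp}\subseteq\overline G)$ (a deterministic task). Let $f(\overline G)$ be the classifier that outputs label $\mathds 1(g_{exp}\subseteq\overline G)$ with probability one. For $p\in[0,1]$, let $\Psi_p$ be the (stochastic) explanation function with $P(\Psi_p(\overline g)=g_{exp}\mid g_{exp}\subseteq\overline g)=p$ and $P(\Psi_p(\overline g)=\phi\mid g_{exp}\subseteq\overline g)=1-p$, where $\phi$ is the empty graph, and let $\mathcal S=\{\Psi_p:p\in[0,1]\}$. Then the fidelity measure $Fid_\Delta$ is well-behaved for $\{f\}$ and $\mathcal S$.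
   Context: Graph data: a random labeled graph $G=(\mathcal V,\mathcal E;Y,\mathbf X,\mathbf A)$ with unlabeled version $\overline G$. A classifier $f$ maps an unlabeled graph to a distribution on labels; $\widehat Y\sim f(\overline G)$. An explanation function $\Psi$ maps $\overline G$ to a subgraph $\Psi(\overline G)$ of it. For an explanation function $\Psi$, $$I(\widehat Y;\overline G\mid\mathds 1_{\Psi(\overline G)})\triangleq\sum_{g'}P_{\Psi(\overline G)}(g')\sum_{y,\overline g}P_{\widehat Y,\overline G}(y,\overline g|g'\subseteq\overline G)\log\frac{P_{\widehat Y,\overline G}(y,\overline g|g'\subseteq\overline G)}{P_{\widehat Y}(y|g'\subseteq\overline G)P_{\overline G}(\overline g|g'\subseteq\overline G)}.$$ Fidelity measures: let $\widehat P(\cdot)$ be the distribution $f(\overline G)$, $\widehat P^+(\cdot)$ the distribution $f(\overline G-\Psi(\overline G))$ where $\overline G-\Psi(\overline G)$ is the subgraph with edge set $\mathcal E\setminus\mathcal E_{exp}$, and $\widehat P^-(\cdot)$ the distribution $f(\Psi(\overline G))$. Define $Fid_+=\mathbb E[\widehat P(Y)-\widehat P^+(Y)]$, $Fid_-=\mathbb E[\widehat P(Y)-\widehat P^-(Y)]$, $Fid_\Delta=Fid_+-Fid_-$ (expectation over $(\overline G,Y)$ and randomness of $\Psi$). A fidelity measure $Fid(f,\Psi)$ is well-behaved for a set of classifiers $\mathcal F$ and explanation functions $\mathcal S$ if for all $f\in\mathcal F$ and $\Psi_1,\Psi_2\in\mathcal S$: $I(\widehat Y;\overline G|\mathds 1_{\Psi_1(\overline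 G)})\le I(\widehat Y;\overline G|\mathds 1_{\Psi_2(\overline G)})$ if and only if $Fid(f,\Psi_2)\le Fid(f,\Psi_1)$. *)

theory Defs
  imports "HOL-Probability.Probability"
begin

text \<open>An (unlabeled) graph whose vertices are natural numbers: a set of undirected edges,
  each edge (i,j) stored with i < j, together with a partial feature map assigning to each
  vertex of the graph its feature row (a list of length d).  The vertex set is dom X.\<close>
type_synonym 'z graph = "(nat \<times> nat) set \<times> (nat \<Rightarrow> 'z list option)"

definition edges :: "'z graph \<Rightarrow> (nat \<times> nat) set" where
  "edges g = fst g"

definition feats :: "'z graph \<Rightarrow> (nat \<Rightarrow> 'z list option)" where
  "feats g = snd g"

definition graphs_on :: "nat \<Rightarrow> nat \<Rightarrow> 'z set \<Rightarrow> 'z graph set" where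
  "graphs_on n d Z = {g. edges g \<subseteq> {(i,j). i < j \<and> j < n} \<and> dom (feats g) = {..<n} \<and>
      (\<forall>v xs. feats g v = Some xs \<longrightarrow> length xs = d \<and> set xs \<subseteq> Z)}"

definition pot_edges :: "nat \<Rightarrow> (nat \<times> nat) set" where
  "pot_edges n = {(i,j). i < j \<and> j < n}"

definition subgraph :: "'z graph \<Rightarrow> 'z graph \<Rightarrow> bool" where
  "subgraph g' g \<longleftrightarrow> edges g' \<subseteq> edges g \<and> feats g' \<subseteq>\<^sub>m feats g"

definition empty_graph :: "'z graph" where
  "empty_graph = ({}, Map.empty)"

definition graph_minus :: "'z graph \<Rightarrow> 'z graph \<Rightarrow> 'z graph" where
  "graph_minus g s = (edges g - edges s, feats g)"

definition mutual_info :: "('a \<times> 'b) pmf \<Rightarrow> real" where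
  "mutual_info P = (\<Sum>(a,b)\<in>set_pmf P. pmf P (a,b) *
      log 2 (pmf P (a,b) / (pmf (map_pmf fst P) a * pmf (map_pmf snd P) b)))"

text \<open>Classifiers map an unlabeled graph to a distribution over labels (bool, True = label 1);
  explanation functions map an unlabeled graph to a distribution over (its) subgraphs.
  D is the joint distribution of (unlabeled graph, label).\<close>

definition pred_joint :: "('z graph \<times> bool) pmf \<Rightarrow> ('z graph \<Rightarrow> bool pmf) \<Rightarrow> (bool \<times> 'z graph) pmf" where
  "pred_joint D f = map_pmf fst D \<bind> (\<lambda>g. map_pmf (\<lambda>y. (y, g)) (f g))"

text \<open>I(Yhat; Gbar | 1_{Psi(Gbar)}).\<close>
definition cond_MI_expl ::
  "('z graph \<times> bool) pmf \<Rightarrow> ('z graph \<Rightarrow> bool pmf) \<Rightarrow> ('z graph \<Rightarrow> 'z graph pmf) \<Rightarrow> real" where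
  "cond_MI_expl D f \<Psi> =
    (let PPsi = map_pmf fst D \<bind> \<Psi>; J = pred_joint D f in
     \<Sum>g'\<in>set_pmf PPsi. pmf PPsi g' * mutual_info (cond_pmf J {(y, g). subgraph g' g}))"

definition Fid_plus ::
  "('z graph \<times> bool) pmf \<Rightarrow> ('z graph \<Rightarrow> bool pmf) \<Rightarrow> ('z graph \<Rightarrow> 'z graph pmf) \<Rightarrow> real" where
  "Fid_plus D f \<Psi> = measure_pmf.expectation D (\<lambda>(g, y).
      measure_pmf.expectation (\<Psi> g) (\<lambda>s. pmf (f g) y - pmf (f (graph_minus g s)) y))"

definition Fid_minus ::
  "('z graph \<times> bool) pmf \<Rightarrow> ('z graph \<Rightarrow> bool pmf) \<Rightarrow> ('z graph \<Rightarrow> 'z graph pmf) \<Rightarrow> real" where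
  "Fid_minus D f \<Psi> = measure_pmf.expectation D (\<lambda>(g, y).
      measure_pmf.expectation (\<Psi> g) (\<lambda>s. pmf (f g) y - pmf (f s) y))"

definition Fid_Delta ::
  "('z graph \<times> bool) pmf \<Rightarrow> ('z graph \<Rightarrow> bool pmf) \<Rightarrow> ('z graph \<Rightarrow> 'z graph pmf) \<Rightarrow> real" where
  "Fid_Delta D f \<Psi> = Fid_plus D f \<Psi> - Fid_minus D f \<Psi>"

definition well_behaved ::
  "(('z graph \<Rightarrow> bool pmf) \<Rightarrow> ('z graph \<Rightarrow> 'z graph pmf) \<Rightarrow> real) \<Rightarrow> ('z graph \<times> bool) pmf \<Rightarrow>
   ('z graph \<Rightarrow> bool pmf) set \<Rightarrow> ('z graph \<Rightarrow> 'z graph pmf) set \<Rightarrow> bool" where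
  "well_behaved Fid D F S \<longleftrightarrow>
    (\<forall>f\<in>F. \<forall>\<Psi>1\<in>S. \<forall>\<Psi>2\<in>S.
       cond_MI_expl D f \<Psi>1 \<le> cond_MI_expl D f \<Psi>2 \<longleftrightarrow> Fid f \<Psi>2 \<le> Fid f \<Psi>1)"

text \<open>The stochastic explanation function Psi_p: on graphs containing g_exp it returns g_exp
  with probability p and the empty graph with probability 1-p; on the remaining graphs it
  follows a fixed kernel K (the same for every p).\<close>
definition Psi_p :: "'z graph \<Rightarrow> ('z graph \<Rightarrow> 'z graph pmf) \<Rightarrow> real \<Rightarrow> 'z graph \<Rightarrow> 'z graph pmf" where
  "Psi_p gexp K p g = (if subgraph gexp g
      then map_pmf (\<lambda>b. if b then gexp else empty_graph) (bernoulli_pmf p) else K g)"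

end

theory Submission
  imports Defs
begin

lemma sub_empty[simp]: "subgraph empty_graph g"
  by (simp add: subgraph_def empty_graph_def edges_def feats_def)

lemma not_sub_empty: "edges gexp \<noteq> {} \<Longrightarrow> \<not> subgraph gexp empty_graph"
  by (simp add: subgraph_def empty_graph_def edges_def feats_def)

lemma minus_gexp: "edges gexp \<noteq> {} \<Longrightarrow> \<not> subgraph gexp (graph_minus g gexp)"
  by (auto simp add: subgraph_def graph_minus_def edges_def feats_def)

lemma minus_empty[simp]: "graph_minus g empty_graph = g"
  by (simp add: graph_minus_def empty_graph_def edges_def feats_def)

lemma minus_sub: "subgraph gexp (graph_minus g s) \<Longrightarrow> subgraph gexp g"
  by (auto simp add: subgraph_def graph_minus_def edges_def feats_def)

lemma gexp_ne_empty: "edges gexp \<noteq> {} \<Longrightarrow> gexp \<noteq> empty_graph"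
  by (auto simp add: empty_graph_def edges_def)

lemma sub_refl[simp]: "subgraph g g"
  by (simp add: subgraph_def)

lemma finite_subgraphs:
  assumes "finite (edges g)" "finite (dom (feats g))"
  shows "finite {s. subgraph s g}"
proof -
  have "{s. subgraph s g} \<subseteq> (\<lambda>(E,D). (E, feats g |` D)) ` (Pow (edges g) \<times> Pow (dom (feats g)))"
  proof
    fix s assume "s \<in> {s. subgraph s g}"
    hence s: "edges s \<subseteq> edges g" "feats s \<subseteq>\<^sub>m feats g" by (auto simp: subgraph_def)
    have "feats s = feats g |` dom (feats s)"
      using s(2) by (auto simp: map_le_def restrict_map_def fun_eq_iff)
    moreover have "dom (feats s) \<subseteq> dom (feats g)" using s(2) by (simp add: map_le_implies_dom_le)
    ultimately show "s \<in> (\<lambda>(E,D). (E, feats g |` D)) ` (Pow (edges g) \<times> Pow (dom (feats g)))"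
      using s(1) by (intro image_eqI[where x="(edges s, dom (feats s))"])
         (auto simp: edges_def feats_def)
  qed
  thus ?thesis by (rule finite_subset) (use assms in auto)
qed

lemma finite_pot: "finite (pot_edges n)"
proof -
  have "pot_edges n \<subseteq> {..<n} \<times> {..<n}" by (auto simp: pot_edges_def)
  thus ?thesis by (rule finite_subset) auto
qed

lemma graphs_on_fin_parts:
  assumes "g \<in> graphs_on n d Z"
  shows "finite (edges g)" "finite (dom (feats g))"
proof -
  have "edges g \<subseteq> pot_edges n" using assms by (auto simp: graphs_on_def pot_edges_def)
  thus "finite (edges g)" using finite_pot finite_subset by blast
  show "finite (dom (feats g))" using assms by (auto simp: graphs_on_def)
qed

lemma finite_graphs_on:
  assumes "finite Z"
  shows "finite (graphs_on n d Z)"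
proof -
  define L where "L = {xs. set xs \<subseteq> Z \<and> length xs = d}"
  have fL: "finite L" unfolding L_def using finite_lists_length_eq[OF assms] by simp
  define mk where "mk = (\<lambda>h::nat \<Rightarrow> 'a list. \<lambda>v. if v < n then Some (h v) else None)"
  have "graphs_on n d Z \<subseteq> Pow (pot_edges n) \<times> (mk ` (PiE {..<n} (\<lambda>_. L)))"
  proof
    fix g assume g: "g \<in> graphs_on n d Z"
    have e: "fst g \<in> Pow (pot_edges n)" using g by (auto simp: graphs_on_def pot_edges_def edges_def)
    have dm: "dom (snd g) = {..<n}" and vals: "\<And>v xs. snd g v = Some xs \<Longrightarrow> length xs = d \<and> set xs \<subseteq> Z"
      using g by (auto simp: graphs_on_def feats_def)
    define h where "h = (\<lambda>v. if v < n then the (snd g v) else undefined)"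
    have "h \<in> PiE {..<n} (\<lambda>_. L)"
    proof -
      { fix v assume "v < n"
        then obtain xs where "snd g v = Some xs" using dm by auto
        hence "h v \<in> L" using vals \<open>v<n\<close> by (auto simp: h_def L_def) }
      thus ?thesis by (auto simp: h_def PiE_def extensional_def)
    qed
    moreover have "snd g = mk h"
    proof
      fix v show "snd g v = mk h v"
      proof (cases "v < n")
        case True
        then obtain xs where "snd g v = Some xs" using dm by auto
        thus ?thesis using True by (simp add: mk_def h_def)
      next
        case False
        hence "v \<notin> dom (snd g)" using dm by auto
        thus ?thesis using False by (auto simp add: mk_def)
      qed
    qed
    ultimately show "g \<in> Pow (pot_edges n) \<times> (mk ` (PiE {..<n} (\<lambda>_. L)))"
      using e by (cases g) auto
  qed
  moreover have "finite (Pow (pot_edges n) \<times> (mk ` (PiE {..<n} (\<lambda>_. L))))"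
    using finite_pot fL by (intro finite_cartesian_product finite_imageI finite_PiE) auto
  ultimately show ?thesis by (rule finite_subset)
qed


lemma pmf_integral_cong:
  fixes f g :: "'a \<Rightarrow> real"
  shows "(\<And>x. x \<in> set_pmf M \<Longrightarrow> f x = g x) \<Longrightarrow> measure_pmf.expectation M f = measure_pmf.expectation M g"
  by (auto intro!: integral_cong_AE simp: AE_measure_pmf_iff)

lemma cond_pmf_UNIV: "cond_pmf p UNIV = p"
proof (rule pmf_eqI)
  fix x
  have ne: "set_pmf p \<inter> UNIV \<noteq> {}" using set_pmf_not_empty by auto
  show "pmf (cond_pmf p UNIV) x = pmf p x"
    using pmf_cond[OF ne, of x] by (simp add: measure_pmf.prob_space)
qed

lemma exp_bind_finite:
  fixes h :: "'b \<Rightarrow> real"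
  assumes fin: "finite (set_pmf N)" and fB: "finite B"
    and sub: "\<And>x. x \<in> set_pmf N \<Longrightarrow> set_pmf (F x) \<subseteq> B"
  shows "measure_pmf.expectation (bind_pmf N F) h =
         measure_pmf.expectation N (\<lambda>x. measure_pmf.expectation (F x) h)"
proof -
  have "measure_pmf.expectation (bind_pmf N F) h = (\<Sum>b\<in>B. h b * pmf (bind_pmf N F) b)"
    by (rule integral_measure_pmf_real) (use fB sub in auto)
  also have "\<dots> = (\<Sum>b\<in>B. h b * (\<Sum>x\<in>set_pmf N. pmf (F x) b * pmf N x))"
    by (intro sum.cong refl arg_cong2[where f="(*)"], simp only: pmf_bind,
        rule integral_measure_pmf_real) (use fin in auto)
  also have "\<dots> = (\<Sum>x\<in>set_pmf N. (\<Sum>b\<in>B. h b * pmf (F x) b) * pmf N x)"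
    by (simp add: sum_distrib_left sum_distrib_right mult_ac sum.swap[of _ B])
  also have "\<dots> = measure_pmf.expectation N (\<lambda>x. measure_pmf.expectation (F x) h)"
  proof -
    have inner: "\<And>x. x \<in> set_pmf N \<Longrightarrow> measure_pmf.expectation (F x) h = (\<Sum>b\<in>B. h b * pmf (F x) b)"
      by (rule integral_measure_pmf_real) (use fB sub in auto)
    have "measure_pmf.expectation N (\<lambda>x. measure_pmf.expectation (F x) h) =
       (\<Sum>x\<in>set_pmf N. measure_pmf.expectation (F x) h * pmf N x)"
      by (rule integral_measure_pmf_real) (use fin in auto)
    also have "\<dots> = (\<Sum>x\<in>set_pmf N. (\<Sum>b\<in>B. h b * pmf (F x) b) * pmf N x)"
      using inner by simp
    finally show ?thesis by simp
  qed
  finally show ?thesis .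
qed

lemma mi_const_fst:
  assumes "\<forall>x\<in>set_pmf P. fst x = a"
  shows "mutual_info P = 0"
proof -
  define Q where "Q = map_pmf snd P"
  have PQ: "P = map_pmf (\<lambda>b. (a,b)) Q"
  proof -
    have "map_pmf (\<lambda>b. (a,b)) Q = map_pmf (\<lambda>x. (a, snd x)) P" by (simp add: Q_def map_pmf_comp)
    also have "\<dots> = map_pmf id P" using assms by (intro map_pmf_cong) auto
    finally show ?thesis by simp
  qed
  have F: "map_pmf fst P = return_pmf a"
    using assms by (subst set_pmf_subset_singleton[symmetric]) auto
  have SQ: "map_pmf snd P = Q" by (simp add: Q_def)
  have inj: "inj (\<lambda>b. (a,b))" by (auto simp: inj_def)
  show ?thesis unfolding mutual_info_def
  proof (rule sum.neutral, safe)
    fix a' b assume ab: "(a', b) \<in> set_pmf P"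
    hence a': "a' = a" using assms by auto
    have bQ: "b \<in> set_pmf Q" using ab by (simp add: Q_def) (metis snd_conv image_eqI)
    have "pmf P (a, b) = pmf Q b" unfolding PQ by (rule pmf_map_inj'[OF inj])
    moreover have "pmf Q b > 0" using bQ by (simp add: pmf_positive)
    ultimately show "pmf P (a', b) * log 2 (pmf P (a', b) / (pmf (map_pmf fst P) a' * pmf (map_pmf snd P) b)) = 0"
      using a' by (simp add: F SQ)
  qed
qed

lemma mi_pos:
  fixes c :: "'a \<Rightarrow> bool"
  assumes fin: "finite (set_pmf DG)"
    and lt: "\<forall>g\<in>set_pmf DG. measure_pmf.prob DG {x. c x = c g} < 1"
  shows "mutual_info (map_pmf (\<lambda>g. (c g, g)) DG) > 0"
proof -
  define J where "J = map_pmf (\<lambda>g. (c g, g)) DG"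
  have inj: "inj (\<lambda>g. (c g, g))" by (auto simp: inj_def)
  have SJ: "map_pmf snd J = DG" by (simp add: J_def map_pmf_comp)
  have FJ: "map_pmf fst J = map_pmf c DG" by (simp add: J_def map_pmf_comp)
  show ?thesis unfolding J_def[symmetric] mutual_info_def
  proof (rule sum_pos)
    show "finite (set_pmf J)" using fin by (simp add: J_def)
    show "set_pmf J \<noteq> {}" by (rule set_pmf_not_empty)
    fix x assume "x \<in> set_pmf J"
    then obtain g where g: "g \<in> set_pmf DG" and x: "x = (c g, g)" by (auto simp: J_def)
    define Q where "Q = measure_pmf.prob DG {y. c y = c g}"
    have pJ: "pmf J (c g, g) = pmf DG g" unfolding J_def by (rule pmf_map_inj'[OF inj])
    have pF: "pmf (map_pmf fst J) (c g) = Q" unfolding FJ Q_def pmf_map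
      by (simp add: vimage_def)
    have pg: "pmf DG g > 0" using g by (simp add: pmf_positive)
    have "pmf DG g \<le> Q" unfolding Q_def measure_pmf_single[symmetric]
      by (rule measure_pmf.finite_measure_mono) auto
    hence Qpos: "Q > 0" using pg by linarith
    have Q1: "Q < 1" using lt g by (simp add: Q_def)
    have "log 2 (1 / Q) > 0" using Qpos Q1 by simp
    moreover have "pmf DG g / (Q * pmf DG g) = 1 / Q" using pg by simp
    ultimately show "(case x of (a, b) \<Rightarrow> pmf J (a, b) * log 2 (pmf J (a, b) / (pmf (map_pmf fst J) a * pmf (map_pmf snd J) b))) > 0"
      using pg by (simp add: x pJ pF SJ)
  qed
qed


lemma fid_formula:
  assumes ne: "edges gexp \<noteq> {}"
    and K: "\<forall>g\<in>set_pmf DG. \<not> subgraph gexp g \<longrightarrow> (\<forall>s\<in>set_pmf (K g). subgraph s g)"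
    and p: "0 \<le> p" "p \<le> 1"
  shows "Fid_Delta (map_pmf (\<lambda>g. (g, subgraph gexp g)) DG) (\<lambda>g. return_pmf (subgraph gexp g)) (Psi_p gexp K p)
    = (2*p - 1) * measure_pmf.prob DG {g. subgraph gexp g}"
proof -
  let ?A = "{g. subgraph gexp g}"
  have plus: "Fid_plus (map_pmf (\<lambda>g. (g, subgraph gexp g)) DG) (\<lambda>g. return_pmf (subgraph gexp g)) (Psi_p gexp K p)
      = p * measure_pmf.prob DG ?A"
  proof -
    have "Fid_plus (map_pmf (\<lambda>g. (g, subgraph gexp g)) DG) (\<lambda>g. return_pmf (subgraph gexp g)) (Psi_p gexp K p)
       = measure_pmf.expectation DG (\<lambda>g. p * indicator ?A g)"
      unfolding Fid_plus_def integral_map_pmf case_prod_conv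
    proof (rule pmf_integral_cong)
      fix g assume g: "g \<in> set_pmf DG"
      show "measure_pmf.expectation (Psi_p gexp K p g)
          (\<lambda>s. pmf (return_pmf (subgraph gexp g)) (subgraph gexp g) -
               pmf (return_pmf (subgraph gexp (graph_minus g s))) (subgraph gexp g)) = p * indicator ?A g"
      proof (cases "subgraph gexp g")
        case True
        thus ?thesis using p minus_gexp[OF ne, of g] by (simp add: Psi_p_def)
      next
        case False
        have "measure_pmf.expectation (K g)
          (\<lambda>s. pmf (return_pmf (subgraph gexp g)) (subgraph gexp g) -
               pmf (return_pmf (subgraph gexp (graph_minus g s))) (subgraph gexp g)) =
           measure_pmf.expectation (K g) (\<lambda>s. 0)"
          using False minus_sub[of gexp g] by (intro pmf_integral_cong) (auto simp: indicator_def)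
        thus ?thesis using False by (simp add: Psi_p_def)
      qed
    qed
    also have "\<dots> = p * measure_pmf.prob DG ?A" by simp
    finally show ?thesis .
  qed
  have minus: "Fid_minus (map_pmf (\<lambda>g. (g, subgraph gexp g)) DG) (\<lambda>g. return_pmf (subgraph gexp g)) (Psi_p gexp K p)
      = (1-p) * measure_pmf.prob DG ?A"
  proof -
    have "Fid_minus (map_pmf (\<lambda>g. (g, subgraph gexp g)) DG) (\<lambda>g. return_pmf (subgraph gexp g)) (Psi_p gexp K p)
       = measure_pmf.expectation DG (\<lambda>g. (1-p) * indicator ?A g)"
      unfolding Fid_minus_def integral_map_pmf case_prod_conv
    proof (rule pmf_integral_cong)
      fix g assume g: "g \<in> set_pmf DG"
      show "measure_pmf.expectation (Psi_p gexp K p g)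
          (\<lambda>s. pmf (return_pmf (subgraph gexp g)) (subgraph gexp g) -
               pmf (return_pmf (subgraph gexp s)) (subgraph gexp g)) = (1-p) * indicator ?A g"
      proof (cases "subgraph gexp g")
        case True
        thus ?thesis using p not_sub_empty[OF ne] by (simp add: Psi_p_def)
      next
        case False
        have "measure_pmf.expectation (K g)
          (\<lambda>s. pmf (return_pmf (subgraph gexp g)) (subgraph gexp g) -
               pmf (return_pmf (subgraph gexp s)) (subgraph gexp g)) =
           measure_pmf.expectation (K g) (\<lambda>s. 0)"
        proof (intro pmf_integral_cong)
          fix s assume "s \<in> set_pmf (K g)"
          hence "subgraph s g" using K g False by auto
          hence "\<not> subgraph gexp s" using False
            by (auto simp: subgraph_def intro: map_le_trans)
          thus "pmf (return_pmf (subgraph gexp g)) (subgraph gexp g) -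
               pmf (return_pmf (subgraph gexp s)) (subgraph gexp g) = 0" using False by simp
        qed
        thus ?thesis using False by (simp add: Psi_p_def)
      qed
    qed
    also have "\<dots> = (1-p) * measure_pmf.prob DG ?A" by simp
    finally show ?thesis .
  qed
  show ?thesis unfolding Fid_Delta_def plus minus by (simp add: algebra_simps)
qed


lemma mi_formula:
  fixes DG :: "'z graph pmf"
  assumes fin: "finite (set_pmf DG)"
    and fsub: "\<forall>g\<in>set_pmf DG. finite {s. subgraph s g}"
    and K: "\<forall>g\<in>set_pmf DG. \<not> subgraph gexp g \<longrightarrow> (\<forall>s\<in>set_pmf (K g). subgraph s g)"
    and p: "0 \<le> p" "p \<le> 1"
  defines "J \<equiv> map_pmf (\<lambda>g. (subgraph gexp g, g)) DG"
  defines "M \<equiv> (\<lambda>g'. mutual_info (cond_pmf J {(y, g). subgraph g' g}))"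
  defines "C \<equiv> measure_pmf.expectation DG (\<lambda>g. if subgraph gexp g then 0 else measure_pmf.expectation (K g) M)"
  shows "cond_MI_expl (map_pmf (\<lambda>g. (g, subgraph gexp g)) DG) (\<lambda>g. return_pmf (subgraph gexp g)) (Psi_p gexp K p)
    = measure_pmf.prob DG {g. subgraph gexp g} * (p * M gexp + (1-p) * M empty_graph) + C"
proof -
  let ?D = "map_pmf (\<lambda>g. (g, subgraph gexp g)) DG"
  let ?f = "\<lambda>g. return_pmf (subgraph gexp g)"
  let ?Psi = "Psi_p gexp K p"
  let ?A = "{g. subgraph gexp g}"
  have fstD: "map_pmf fst ?D = DG" by (simp add: map_pmf_comp)
  have PJ: "pred_joint ?D ?f = J"
    unfolding pred_joint_def fstD J_def by (simp add: map_pmf_def[of "\<lambda>g. (subgraph gexp g, g)"])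
  define PP where "PP = DG \<bind> ?Psi"
  define B where "B = {gexp, empty_graph} \<union> (\<Union>g\<in>set_pmf DG. {s. subgraph s g})"
  have fB: "finite B" unfolding B_def using fin fsub by auto
  have subB: "\<And>g. g \<in> set_pmf DG \<Longrightarrow> set_pmf (?Psi g) \<subseteq> B"
  proof -
    fix g assume g: "g \<in> set_pmf DG"
    show "set_pmf (?Psi g) \<subseteq> B"
    proof (cases "subgraph gexp g")
      case True thus ?thesis by (auto simp: Psi_p_def B_def)
    next
      case False thus ?thesis using K g by (auto simp: Psi_p_def B_def)
    qed
  qed
  have fPP: "finite (set_pmf PP)"
    by (rule finite_subset[OF _ fB]) (use subB in \<open>auto simp: PP_def\<close>)
  have "cond_MI_expl ?D ?f ?Psi = (\<Sum>g'\<in>set_pmf PP. pmf PP g' * M g')"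
    unfolding cond_MI_expl_def Let_def fstD PJ PP_def M_def ..
  also have "\<dots> = measure_pmf.expectation PP M"
    by (subst integral_measure_pmf_real[of "set_pmf PP"]) (use fPP in \<open>auto simp: mult.commute\<close>)
  also have "\<dots> = measure_pmf.expectation DG (\<lambda>g. measure_pmf.expectation (?Psi g) M)"
    unfolding PP_def by (rule exp_bind_finite[OF fin fB subB])
  also have "\<dots> = measure_pmf.expectation DG (\<lambda>g. (p * M gexp + (1-p) * M empty_graph) * indicator ?A g
       + (if subgraph gexp g then 0 else measure_pmf.expectation (K g) M))"
    by (rule pmf_integral_cong) (use p in \<open>auto simp: Psi_p_def\<close>)
  also have "\<dots> = measure_pmf.prob DG ?A * (p * M gexp + (1-p) * M empty_graph) + C"
    unfolding C_def
    by (subst Bochner_Integration.integral_add[OF integrable_measure_pmf_finite[OF fin] integrable_measure_pmf_finite[OF fin]])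
       (simp add: mult.commute)
  finally show ?thesis .
qed


theorem proposition3:
  fixes n d :: nat and Z :: "'z set" and DG :: "'z graph pmf" and gexp :: "'z graph"
    and K :: "'z graph \<Rightarrow> 'z graph pmf"
  assumes "finite Z"
    and "set_pmf DG = graphs_on n d Z"
    and "prob_space.indep_vars (measure_pmf DG) (\<lambda>_. count_space UNIV) (\<lambda>e g. e \<in> edges g) (pot_edges n)"
    and "edges gexp \<noteq> {}"
    and "\<forall>g\<in>set_pmf DG. \<not> subgraph gexp g \<longrightarrow> (\<forall>s\<in>set_pmf (K g). subgraph s g)"
  shows "well_behaved (Fid_Delta (map_pmf (\<lambda>g. (g, subgraph gexp g)) DG))
           (map_pmf (\<lambda>g. (g, subgraph gexp g)) DG)
           {\<lambda>g. return_pmf (subgraph gexp g)}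
           {Psi_p gexp K p | p. p \<in> {0..1}}"
proof -
  note ne = assms(4) and Kass = assms(5)
  have fin: "finite (set_pmf DG)" using assms(1,2) finite_graphs_on by metis
  have fsub: "\<forall>g\<in>set_pmf DG. finite {s. subgraph s g}"
    using assms(2) graphs_on_fin_parts finite_subgraphs by metis
  let ?A = "{g. subgraph gexp g}"
  define q where "q = measure_pmf.prob DG ?A"
  define J where "J = map_pmf (\<lambda>g. (subgraph gexp g, g)) DG"
  define M where "M = (\<lambda>g'. mutual_info (cond_pmf J {(y, g). subgraph g' g}))"
  define C where "C = measure_pmf.expectation DG (\<lambda>g. if subgraph gexp g then 0 else measure_pmf.expectation (K g) M)"
  have MI: "\<And>p. p \<in> {0..1} \<Longrightarrow> cond_MI_expl (map_pmf (\<lambda>g. (g, subgraph gexp g)) DG) (\<lambda>g. return_pmf (subgraph gexp g)) (Psi_p gexp K p)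
     = q * (p * M gexp + (1-p) * M empty_graph) + C"
    unfolding q_def M_def C_def J_def by (rule mi_formula[OF fin fsub Kass]) auto
  have FD: "\<And>p. p \<in> {0..1} \<Longrightarrow> Fid_Delta (map_pmf (\<lambda>g. (g, subgraph gexp g)) DG) (\<lambda>g. return_pmf (subgraph gexp g)) (Psi_p gexp K p)
     = (2*p - 1) * q"
    unfolding q_def by (rule fid_formula[OF ne Kass]) auto
  have q0: "q \<ge> 0" by (simp add: q_def)
  have compl: "measure_pmf.prob DG (UNIV - ?A) = 1 - q"
    unfolding q_def using measure_pmf.prob_compl[of ?A DG] by simp
  have q1: "q < 1"
  proof -
    obtain g0 where g0: "g0 \<in> set_pmf DG" using set_pmf_not_empty[of DG] by blast
    define g1 where "g1 = ({} :: (nat\<times>nat) set, feats g0)"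
    have "g1 \<in> graphs_on n d Z" using g0 assms(2)
      by (auto simp: g1_def graphs_on_def edges_def feats_def)
    hence g1S: "g1 \<in> set_pmf DG" using assms(2) by simp
    have "\<not> subgraph gexp g1" using ne by (auto simp: g1_def subgraph_def edges_def)
    hence "pmf DG g1 \<le> measure_pmf.prob DG (UNIV - ?A)"
      unfolding measure_pmf_single[symmetric] by (intro measure_pmf.finite_measure_mono) auto
    moreover have "pmf DG g1 > 0" using g1S by (simp add: pmf_positive)
    ultimately show ?thesis using compl by linarith
  qed
  have key: "\<And>p1 p2. p1 \<in> {0..1} \<Longrightarrow> p2 \<in> {0..1} \<Longrightarrow>
     (q * (p1 * M gexp + (1-p1) * M empty_graph) + C \<le> q * (p2 * M gexp + (1-p2) * M empty_graph) + C)
     \<longleftrightarrow> ((2*p2 - 1) * q \<le> (2*p1 - 1) * q)"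
  proof -
    fix p1 p2 :: real
    show "?thesis p1 p2"
    proof (cases "q = 0")
      case True thus ?thesis by simp
    next
      case False
      hence qpos: "q > 0" using q0 by simp
      have Mg: "M gexp = 0"
      proof -
        have "set_pmf DG \<inter> ?A \<noteq> {}" using qpos measure_pmf_zero_iff[of DG ?A] q_def by auto
        hence nz: "set_pmf J \<inter> {(y, g). subgraph gexp g} \<noteq> {}" by (auto simp: J_def)
        show ?thesis unfolding M_def
          by (rule mi_const_fst[where a=True]) (use nz in \<open>auto simp: J_def\<close>)
      qed
      have Me: "M empty_graph > 0"
      proof -
        have U: "{(y, g). subgraph empty_graph g} = (UNIV :: (bool \<times> 'z graph) set)" by auto
        have "M empty_graph = mutual_info J" unfolding M_def U cond_pmf_UNIV ..
        also have "\<dots> > 0" unfolding J_def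
        proof (rule mi_pos[OF fin], intro ballI)
          fix g assume "g \<in> set_pmf DG"
          show "measure_pmf.prob DG {x. subgraph gexp x = subgraph gexp g} < 1"
          proof (cases "subgraph gexp g")
            case True thus ?thesis using q1 by (simp add: q_def)
          next
            case False
            have "{x. subgraph gexp x = subgraph gexp g} = UNIV - ?A" using False by auto
            thus ?thesis using compl qpos by simp
          qed
        qed
        finally show ?thesis .
      qed
      have "(q * (p1 * M gexp + (1-p1) * M empty_graph) + C \<le> q * (p2 * M gexp + (1-p2) * M empty_graph) + C)
          \<longleftrightarrow> (1-p1) * (q * M empty_graph) \<le> (1-p2) * (q * M empty_graph)"
        by (simp add: Mg algebra_simps)
      also have "\<dots> \<longleftrightarrow> p2 \<le> p1" using mult_pos_pos[OF qpos Me] by (simp add: mult_le_cancel_right)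
      also have "\<dots> \<longleftrightarrow> ((2*p2 - 1) * q \<le> (2*p1 - 1) * q)" using qpos by (simp add: mult_le_cancel_right)
      finally show ?thesis .
    qed
  qed
  show ?thesis unfolding well_behaved_def
    using key MI FD by auto
qed

end
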